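(* Fix $\theta_j\in[0,1]$ and a non-increasing function $x_{-j}^{-1}$ arising from the other contests' prize structures. Let $x_j,\tilde x_j$ be strictly decreasing interim allocation functions, and set $$\phi_0:=\Phi_j^*(\theta_j;x_j,x_{-j}^{-1}),\qquad \phi_1:=\Phi_j^*(\theta_j;\tilde x_j,x_{-j}^{-1}).$$ Assume $\phi_0>0$. Then: - if $x_j(\phi_0)\ge\tilde x_j(\phi_0)$, then $\phi_0\ge\phi_1$; - if $x_j(\phi_0)\le\tilde x_j(\phi_0)$, then $\phi_0\le\phi_1$.
   Context: Interim allocation function. For a prize structure $\vec w$ with $w_1\ge\dots\ge w_n\ge0$ ($n\ge2$), $x_{\vec w}(\phi)=\sum_kw_k\binom{n-1}{k-1}\phi^{k-1}(1-\phi)^{n-k}$ on $[0,1]$. It is strictly decreasing iff $w_1>w_n$, and constant otherwise. Inverse notation. - For an interim allocation function $x$: $x^{-1}(y):=\max\{\phi\in[0,1]:x(\phi)\ge y\}$, with $x^{-1}(y):=0$ if $x(0)<y$. - Given prize structures of contests $j'\ne j$: $x_{-j}^{-1}:=\sum_{j'\ne j}x_{j'}^{-1}$. - For contest $j$ with strictly decreasing $x_j$: $Q(y):=x_j^{-1}(y)+x_{-j}^{-1}(y)$, $Q^{-1}(q):=\sup\{y:Q(y)\ge q\}$. Equilibrium participation. $\Phi_j^*(q;x_j,x_{-j}^{-1}):=x_j^{-1}(Q^{-1}(q))$. This is the equilibrium probability that a contestant has quantile at most $q$ and enters contest $j$, in the model where contestants with quantiles $q\sim U[0,1]$ choose among contests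 and compete by effort. *)

theory Defs
  imports Complex_Main
begin

definition prize_structure :: "nat \<Rightarrow> (nat \<Rightarrow> real) \<Rightarrow> bool" where
  "prize_structure n w \<longleftrightarrow> 2 \<le> n \<and> (\<forall>k\<in>{1..<n}. w (Suc k) \<le> w k) \<and> 0 \<le> w n"

definition interim :: "nat \<Rightarrow> (nat \<Rightarrow> real) \<Rightarrow> real \<Rightarrow> real" where
  "interim n w \<phi> = (\<Sum>k=1..n. w k * real ((n - 1) choose (k - 1)) * \<phi> ^ (k - 1) * (1 - \<phi>) ^ (n - k))"

definition alloc_inv :: "(real \<Rightarrow> real) \<Rightarrow> real \<Rightarrow> real" where
  "alloc_inv x y = (if x 0 < y then 0 else (GREATEST \<phi>. \<phi> \<in> {0..1} \<and> y \<le> x \<phi>))"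

definition others_inv :: "nat \<Rightarrow> 'c set \<Rightarrow> ('c \<Rightarrow> nat \<Rightarrow> real) \<Rightarrow> real \<Rightarrow> real" where
  "others_inv n J ws y = (\<Sum>c\<in>J. alloc_inv (interim n (ws c)) y)"

definition Qfun :: "(real \<Rightarrow> real) \<Rightarrow> (real \<Rightarrow> real) \<Rightarrow> real \<Rightarrow> real" where
  "Qfun x xmj y = alloc_inv x y + xmj y"

definition Qinv :: "(real \<Rightarrow> real) \<Rightarrow> (real \<Rightarrow> real) \<Rightarrow> real \<Rightarrow> real" where
  "Qinv x xmj q = Sup {y. q \<le> Qfun x xmj y}"

definition Phi_star :: "real \<Rightarrow> (real \<Rightarrow> real) \<Rightarrow> (real \<Rightarrow> real) \<Rightarrow> real" where
  "Phi_star q x xmj = alloc_inv x (Qinv x xmj q)"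

end

theory Submission
  imports Defs "HOL-Analysis.Analysis"
begin

lemma alloc_inv_props:
  fixes f :: "real \<Rightarrow> real"
  assumes cont: "continuous_on UNIV f" and y: "y \<le> f 0"
  shows "alloc_inv f y \<in> {0..1} \<and> y \<le> f (alloc_inv f y)
         \<and> (\<forall>\<phi>\<in>{0..1}. y \<le> f \<phi> \<longrightarrow> \<phi> \<le> alloc_inv f y)"
proof -
  let ?S = "{0..1} \<inter> {\<phi>. y \<le> f \<phi>}"
  have cl: "closed {\<phi>. y \<le> f \<phi>}"
    using cont by (intro closed_Collect_le) (auto intro: continuous_intros)
  have "compact ?S" using cl by (intro compact_Int_closed) auto
  moreover have "0 \<in> ?S" using y by auto
  then have "?S \<noteq> {}" by blast
  moreover note calculation
  ultimately obtain m where m: "m \<in> ?S" "\<forall>z\<in>?S. z \<le> m"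
    using compact_attains_sup by blast
  have "(GREATEST \<phi>. \<phi> \<in> {0..1} \<and> y \<le> f \<phi>) = m"
    by (rule Greatest_equality) (use m in auto)
  then have "alloc_inv f y = m" using y by (simp add: alloc_inv_def)
  then show ?thesis using m by auto
qed

lemma alloc_inv_zero: "f 0 < y \<Longrightarrow> alloc_inv f y = 0"
  by (simp add: alloc_inv_def)

lemma alloc_inv_range:
  assumes "continuous_on UNIV f" shows "alloc_inv f y \<in> {0..1}"
  using alloc_inv_props[OF assms, of y] alloc_inv_zero[of f y] by force

lemma alloc_inv_lower:
  assumes "continuous_on UNIV f" "p \<in> {0..1}" "y \<le> f p" "y \<le> f 0"
  shows "p \<le> alloc_inv f y"
  using alloc_inv_props[OF assms(1,4)] assms by auto

lemma alloc_inv_upper: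
  assumes "continuous_on UNIV f" "p \<in> {0..1}" "\<forall>\<phi>\<in>{0..1}. p < \<phi> \<longrightarrow> f \<phi> < y"
  shows "alloc_inv f y \<le> p"
proof (cases "f 0 < y")
  case True then show ?thesis using assms by (simp add: alloc_inv_zero)
next
  case False
  then have "y \<le> f 0" by simp
  from alloc_inv_props[OF assms(1) this] assms(3) show ?thesis by force
qed

lemma alloc_inv_mono:
  assumes "continuous_on UNIV f" "a \<le> b"
  shows "alloc_inv f b \<le> alloc_inv f a"
proof (cases "f 0 < b")
  case True then show ?thesis using alloc_inv_range[OF assms(1), of a] by (simp add: alloc_inv_zero)
next
  case False
  then have b: "b \<le> f 0" by simp
  from alloc_inv_props[OF assms(1) b] have "alloc_inv f b \<in> {0..1}" "b \<le> f (alloc_inv f b)" by auto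
  then show ?thesis using alloc_inv_lower[OF assms(1), of "alloc_inv f b" a] assms b by auto
qed

lemma interim_cont: "continuous_on UNIV (interim n w)"
  unfolding interim_def by (intro continuous_intros)

lemma Q_props:
  fixes h M :: "real \<Rightarrow> real"
  assumes cont: "continuous_on UNIV h"
    and Mmono: "\<And>a b. a \<le> b \<Longrightarrow> M b \<le> M a"
    and Mnn: "\<And>y. 0 \<le> M y"
    and Mb: "\<And>y. B < y \<Longrightarrow> M y = 0"
    and th: "0 < \<theta>" "\<theta> \<le> 1"
  shows "(\<forall>y. Qinv h M \<theta> < y \<longrightarrow> alloc_inv h y + M y < \<theta>)
       \<and> (\<forall>y. y < Qinv h M \<theta> \<longrightarrow> \<theta> \<le> alloc_inv h y + M y)"
proof -
  let ?S = "{y. \<theta> \<le> Qfun h M y}"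
  define y0 where "y0 = min (h 0) (h 1)"
  have "1 \<le> alloc_inv h y0"
    by (rule alloc_inv_lower[OF cont]) (auto simp: y0_def)
  then have "y0 \<in> ?S" using Mnn[of y0] th by (simp add: Qfun_def)
  then have ne: "?S \<noteq> {}" by blast
  have bdd: "bdd_above ?S"
  proof (rule bdd_aboveI)
    fix y assume "y \<in> ?S"
    show "y \<le> max B (h 0)"
    proof (rule ccontr)
      assume "\<not> y \<le> max B (h 0)"
      then have "M y = 0" "alloc_inv h y = 0" using Mb by (auto simp: alloc_inv_zero)
      then show False using \<open>y \<in> ?S\<close> th by (simp add: Qfun_def)
    qed
  qed
  have down: "y \<in> ?S" if "y \<le> z" "z \<in> ?S" for y z
    using that alloc_inv_mono[OF cont that(1)] Mmono[OF that(1)] by (simp add: Qfun_def)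
  show ?thesis
  proof (intro conjI allI impI)
    fix y assume "Qinv h M \<theta> < y"
    then have "y \<notin> ?S" using cSup_upper[OF _ bdd] unfolding Qinv_def by force
    then show "alloc_inv h y + M y < \<theta>" by (simp add: Qfun_def)
  next
    fix y assume "y < Qinv h M \<theta>"
    then obtain z where "z \<in> ?S" "y < z" using less_cSupE[OF _ ne] unfolding Qinv_def by blast
    then have "y \<in> ?S" using down[of y z] by linarith
    then show "\<theta> \<le> alloc_inv h y + M y" by (simp add: Qfun_def)
  qed
qed

lemma right_cont_eq:
  fixes f :: "real \<Rightarrow> real"
  assumes cont: "continuous_on UNIV f" and p: "0 \<le> p" "p < 1"
    and gt: "\<forall>\<phi>\<in>{0..1}. p < \<phi> \<longrightarrow> f \<phi> < c"
  shows "f p \<le> c"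
proof -
  have "(f \<longlongrightarrow> f p) (at_right p)"
    using cont by (meson continuous_on_def filterlim_at_split iso_tuple_UNIV_I)
  moreover have "eventually (\<lambda>\<phi>. f \<phi> \<le> c) (at_right p)"
  proof -
    have "eventually (\<lambda>\<phi>. \<phi> \<in> {p<..<1}) (at_right p)"
      using p by (intro eventually_at_right_real) auto
    then show ?thesis
      by eventually_elim (use gt p in force)
  qed
  ultimately show ?thesis by (intro tendsto_upperbound) (auto simp: trivial_limit_at_right_real)
qed

lemma sa: "strict_antimono_on {0..1} f \<Longrightarrow> r \<in> {0..1} \<Longrightarrow> s \<in> {0..1} \<Longrightarrow> r < s \<Longrightarrow> f s < (f r :: real)"
  for f :: "real \<Rightarrow> real" by (simp add: monotone_on_def)

definition Hyp where
  "Hyp f g M c0 c1 \<theta> \<longleftrightarrow> c0 = c1 \<or>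
     ((\<forall>y. c1 < y \<longrightarrow> alloc_inv g y + M y < \<theta>) \<and> (\<forall>y. y < c0 \<longrightarrow> \<theta> \<le> alloc_inv f y + M y)
     \<and> (\<forall>y. c0 < y \<longrightarrow> alloc_inv f y + M y < \<theta>) \<and> (\<forall>y. y < c1 \<longrightarrow> \<theta> \<le> alloc_inv g y + M y))"

lemma claim1:
  fixes f g M :: "real \<Rightarrow> real"
  assumes cf: "continuous_on UNIV f" and cg: "continuous_on UNIV g"
    and sf: "strict_antimono_on {0..1} f" and sg: "strict_antimono_on {0..1} g"
    and Mmono: "\<And>a b. a \<le> b \<Longrightarrow> M b \<le> M a"
    and H: "Hyp f g M c0 c1 \<theta>"
    and pos: "0 < alloc_inv f c0"
    and cmp: "g (alloc_inv f c0) \<le> f (alloc_inv f c0)"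
  shows "alloc_inv g c1 \<le> alloc_inv f c0"
proof (rule ccontr)
  define p0 where "p0 = alloc_inv f c0"
  define p1 where "p1 = alloc_inv g c1"
  assume "\<not> ?thesis"
  then have lt: "p0 < p1" by (simp add: p0_def p1_def)
  have c0: "c0 \<le> f 0" using pos alloc_inv_zero[of f c0] by force
  have P0: "p0 \<in> {0..1}" "c0 \<le> f p0" "\<forall>\<phi>\<in>{0..1}. c0 \<le> f \<phi> \<longrightarrow> \<phi> \<le> p0"
    using alloc_inv_props[OF cf c0] by (auto simp: p0_def)
  have "0 < p1" using lt pos p0_def by linarith
  then have c1: "c1 \<le> g 0" using alloc_inv_zero[of g c1] p1_def by force
  have P1: "p1 \<in> {0..1}" "c1 \<le> g p1"
    using alloc_inv_props[OF cg c1] by (auto simp: p1_def)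
  have gtc0: "\<forall>\<phi>\<in>{0..1}. p0 < \<phi> \<longrightarrow> f \<phi> < c0"
    using P0(3) by (meson not_le)
  have "p0 < 1" using lt P1 by auto
  then have "f p0 \<le> c0" using right_cont_eq[OF cf _ _ gtc0] P0 by auto
  then have fp0: "f p0 = c0" using P0 by auto
  have "g p1 < g p0" using sa[OF sg] P0 P1 lt by auto
  show False
  proof (cases "c0 = c1")
    case True
    then show False using \<open>g p1 < g p0\<close> P1 cmp fp0 p0_def by auto
  next
    case False
    then have H1: "\<forall>y. c1 < y \<longrightarrow> alloc_inv g y + M y < \<theta>"
      and H2: "\<forall>y. y < c0 \<longrightarrow> \<theta> \<le> alloc_inv f y + M y"
      using H by (auto simp: Hyp_def)
    define q1 where "q1 = (p0 + p1) / 2"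
    define q2 where "q2 = (p0 + q1) / 2"
    have q: "p0 < q2" "q2 < q1" "q1 < p1" "q1 \<in> {0..1}" "q2 \<in> {0..1}"
      using lt P0 P1 by (auto simp: q1_def q2_def field_simps)
    define y1 where "y1 = g q1"
    have "g p1 < y1" unfolding y1_def using sa[OF sg] q P1 by auto
    have "y1 < g p0" unfolding y1_def using sa[OF sg] q P0 by auto
    have "y1 < c0" using \<open>y1 < g p0\<close> cmp fp0 p0_def by auto
    define y2 where "y2 = max y1 (f q2)"
    have "f q2 < c0" using gtc0 q by auto
    then have "y2 < c0" using \<open>y1 < c0\<close> by (simp add: y2_def)
    then have A: "\<theta> \<le> alloc_inv f y2 + M y2" using H2 by auto
    have B: "alloc_inv g y1 + M y1 < \<theta>" using H1 \<open>g p1 < y1\<close> P1 by auto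
    have "M y2 \<le> M y1" by (rule Mmono) (simp add: y2_def)
    have "alloc_inv f y2 \<le> q2"
    proof (rule alloc_inv_upper[OF cf q(5)], intro ballI impI)
      fix \<phi> :: real assume "\<phi> \<in> {0..1}" "q2 < \<phi>"
      then have "f \<phi> < f q2" using sa[OF sf] q by auto
      then show "f \<phi> < y2" by (simp add: y2_def)
    qed
    moreover have "q1 \<le> alloc_inv g y1"
      by (rule alloc_inv_lower[OF cg q(4)]) (use sa[OF sg, of 0 q1] q in \<open>auto simp: y1_def\<close>)
    ultimately show False using A B \<open>M y2 \<le> M y1\<close> q by linarith
  qed
qed

lemma claim2:
  fixes f g M :: "real \<Rightarrow> real"
  assumes cf: "continuous_on UNIV f" and cg: "continuous_on UNIV g"
    and sf: "strict_antimono_on {0..1} f" and sg: "strict_antimono_on {0..1} g"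
    and Mmono: "\<And>a b. a \<le> b \<Longrightarrow> M b \<le> M a"
    and H: "Hyp f g M c0 c1 \<theta>"
    and pos: "0 < alloc_inv f c0"
    and cmp: "f (alloc_inv f c0) \<le> g (alloc_inv f c0)"
  shows "alloc_inv f c0 \<le> alloc_inv g c1"
proof (rule ccontr)
  define p0 where "p0 = alloc_inv f c0"
  define p1 where "p1 = alloc_inv g c1"
  assume "\<not> ?thesis"
  then have lt: "p1 < p0" by (simp add: p0_def p1_def)
  have c0: "c0 \<le> f 0" using pos alloc_inv_zero[of f c0] by force
  have P0: "p0 \<in> {0..1}" "c0 \<le> f p0"
    using alloc_inv_props[OF cf c0] by (auto simp: p0_def)
  have P1: "p1 \<in> {0..1}" using alloc_inv_range[OF cg] by (simp add: p1_def)
  have "0 \<le> p0" using P0 by auto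
  have g0: "g p0 \<le> g 0"
    using sa[OF sg, of 0 p0] P0 by (cases "p0 = 0") auto
  have "c1 > c0"
  proof (rule ccontr)
    assume "\<not> c1 > c0"
    then have "c1 \<le> g p0" using P0 cmp p0_def by auto
    then have "p0 \<le> p1" unfolding p1_def using alloc_inv_lower[OF cg P0(1)] g0 by auto
    then show False using lt by auto
  qed
  then have H1: "\<forall>y. c0 < y \<longrightarrow> alloc_inv f y + M y < \<theta>"
      and H2: "\<forall>y. y < c1 \<longrightarrow> \<theta> \<le> alloc_inv g y + M y"
      using H by (auto simp: Hyp_def)
  define q1 where "q1 = (p0 + p1) / 2"
  define q2 where "q2 = (p0 + q1) / 2"
  have q: "p1 < q1" "q1 < q2" "q2 < p0" "q1 \<in> {0..1}" "q2 \<in> {0..1}"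
    using lt P0 P1 by (auto simp: q1_def q2_def field_simps)
  have "g q1 < c1"
  proof (cases "g 0 < c1")
    case True
    then show ?thesis using sa[OF sg, of 0 q1] q P1 by (cases "q1 = 0") auto
  next
    case False
    then have "c1 \<le> g 0" by simp
    from alloc_inv_props[OF cg this] have "\<forall>\<phi>\<in>{0..1}. c1 \<le> g \<phi> \<longrightarrow> \<phi> \<le> p1"
      unfolding p1_def[symmetric] by blast
    then show ?thesis using q by (meson not_le)
  qed
  define y1 where "y1 = (max (g q1) c0 + c1) / 2"
  have y1: "y1 < c1" "c0 < y1" "g q1 < y1" using \<open>g q1 < c1\<close> \<open>c1 > c0\<close> by (auto simp: y1_def)
  have B: "\<theta> \<le> alloc_inv g y1 + M y1" using H2 y1 by auto
  have "alloc_inv g y1 \<le> q1"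
  proof (rule alloc_inv_upper[OF cg q(4)], intro ballI impI)
    fix \<phi> :: real assume "\<phi> \<in> {0..1}" "q1 < \<phi>"
    then have "g \<phi> < g q1" using sa[OF sg] q by auto
    then show "g \<phi> < y1" using y1 by simp
  qed
  define y2 where "y2 = min y1 (f q2)"
  have "f p0 < f q2" using sa[OF sf] q P0 by auto
  then have "c0 < y2" using y1 P0 by (auto simp: y2_def)
  then have A: "alloc_inv f y2 + M y2 < \<theta>" using H1 by auto
  have "M y1 \<le> M y2" by (rule Mmono) (simp add: y2_def)
  have "q2 \<le> alloc_inv f y2"
    by (rule alloc_inv_lower[OF cf q(5)]) (use sa[OF sf, of 0 q2] q in \<open>auto simp: y2_def\<close>)
  then show False using A B \<open>M y1 \<le> M y2\<close> q \<open>alloc_inv g y1 \<le> q1\<close> by linarith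
qed

lemma others_props:
  assumes "finite J"
  shows "\<And>a b. a \<le> b \<Longrightarrow> others_inv n J ws b \<le> others_inv n J ws a"
    and "\<And>y. 0 \<le> others_inv n J ws y"
    and "\<And>y. (\<Sum>c\<in>J. \<bar>interim n (ws c) 0\<bar>) < y \<Longrightarrow> others_inv n J ws y = 0"
proof -
  fix a b :: real assume "a \<le> b"
  then show "others_inv n J ws b \<le> others_inv n J ws a"
    unfolding others_inv_def by (intro sum_mono alloc_inv_mono[OF interim_cont])
next
  fix y show "0 \<le> others_inv n J ws y"
    unfolding others_inv_def using alloc_inv_range[OF interim_cont] by (intro sum_nonneg) auto
next
  fix y assume y: "(\<Sum>c\<in>J. \<bar>interim n (ws c) 0\<bar>) < y"
  have "alloc_inv (interim n (ws c)) y = 0" if "c \<in> J" for c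
  proof -
    have "\<bar>interim n (ws c) 0\<bar> \<le> (\<Sum>c\<in>J. \<bar>interim n (ws c) 0\<bar>)"
      using member_le_sum[of c J "\<lambda>c. \<bar>interim n (ws c) 0\<bar>"] that assms by auto
    then show ?thesis using y by (intro alloc_inv_zero) auto
  qed
  then show "others_inv n J ws y = 0" unfolding others_inv_def by simp
qed

theorem mainTheorem11:
  fixes n :: nat and w wt :: "nat \<Rightarrow> real" and J :: "'c set"
    and ws :: "'c \<Rightarrow> nat \<Rightarrow> real" and \<theta> :: real
  assumes "prize_structure n w" and "prize_structure n wt"
    and "finite J" and "\<forall>c\<in>J. prize_structure n (ws c)"
    and "\<theta> \<in> {0..1}"
    and "strict_antimono_on {0..1} (interim n w)"
    and "strict_antimono_on {0..1} (interim n wt)"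
    and "Phi_star \<theta> (interim n w) (others_inv n J ws) > 0"
  shows "(interim n wt (Phi_star \<theta> (interim n w) (others_inv n J ws))
            \<le> interim n w (Phi_star \<theta> (interim n w) (others_inv n J ws))
          \<longrightarrow> Phi_star \<theta> (interim n wt) (others_inv n J ws)
            \<le> Phi_star \<theta> (interim n w) (others_inv n J ws))
       \<and> (interim n w (Phi_star \<theta> (interim n w) (others_inv n J ws))
            \<le> interim n wt (Phi_star \<theta> (interim n w) (others_inv n J ws))
          \<longrightarrow> Phi_star \<theta> (interim n w) (others_inv n J ws)
            \<le> Phi_star \<theta> (interim n wt) (others_inv n J ws))"
proof -
  let ?f = "interim n w" and ?g = "interim n wt" and ?M = "others_inv n J ws"
  note M = others_props[OF assms(3), where n=n and ws=ws]
  have H: "Hyp ?f ?g ?M (Qinv ?f ?M \<theta>) (Qinv ?g ?M \<theta>) \<theta>"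
  proof (cases "\<theta> = 0")
    case True
    have "0 \<le> Qfun (interim n v) ?M y" for v y
      using M(2)[of y] alloc_inv_range[OF interim_cont, of n v y] by (simp add: Qfun_def)
    then have "{y. \<theta> \<le> Qfun ?f ?M y} = UNIV" "{y. \<theta> \<le> Qfun ?g ?M y} = UNIV"
      using True alloc_inv_range[OF interim_cont] by fastforce+
    then show ?thesis by (simp add: Hyp_def Qinv_def)
  next
    case False
    then have th: "0 < \<theta>" "\<theta> \<le> 1" using assms(5) by auto
    show ?thesis
      using Q_props[where M="others_inv n J ws" and B="\<Sum>c\<in>J. \<bar>interim n (ws c) 0\<bar>", OF interim_cont[where n=n and w=w] M(1) M(2) M(3) th]
            Q_props[where M="others_inv n J ws" and B="\<Sum>c\<in>J. \<bar>interim n (ws c) 0\<bar>", OF interim_cont[where n=n and w=wt] M(1) M(2) M(3) th]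
      by (auto simp: Hyp_def)
  qed
  have pos: "0 < alloc_inv ?f (Qinv ?f ?M \<theta>)" using assms(8) by (simp add: Phi_star_def)
  show ?thesis
    using claim1[OF interim_cont interim_cont assms(6,7) M(1) H pos]
          claim2[OF interim_cont interim_cont assms(6,7) M(1) H pos]
    by (simp add: Phi_star_def)
qed

end
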